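(* Let $s,t\in\mathbb{N}$ and $\varepsilon,k,m>0$. The following are equivalent, where each group is considered with the generating set $\{a,b\}$ of its standard presentation: (1) $BS(s,t)$ is $\varepsilon$-densely $(k,m)$-chordal; (2) $BS(-s,t)$ is; (3) $BS(s,-t)$ is; (4) $BS(-s,-t)$ is; (5) $BS(t,s)$ is; (6) $BS(-t,s)$ is; (7) $BS(t,-s)$ is; (8) $BS(-t,-s)$ is.
   Context: For integers $p,q$, $BS(p,q)=\langle a,b\mid ba^pb^{-1}=a^q\rangle$. A group is called $\varepsilon$-densely $(k,m)$-chordal if its Cayley graph with respect to $\{a,b\}$ (vertices the group elements, edges $\{g,gs\}$ for $s\in\{a^{\pm1},b^{\pm1}\}$, each edge of length 1) is. A cycle is a simple closed path (length at least 3); $L$ denotes length and $d_\gamma$ the length metric on the cycle $\gamma$. A shortcut in $\gamma$ is a path $\sigma$ joining vertices $p,q$ of $\gamma$ with $L(\sigma)<d_\gamma(p,q)$; it is strict if $\sigma\cap\gamma=\{p,q\}$, and $p,q$ are its associated shortcut vertices. A graph is $\varepsilon$-densely $(k,m)$-chordal if for every cycle $\gamma$ with $L(\gamma)\ge k$ there are strict shortcuts $\sigma_1,\dots,\sigma_r$ with $L(\sigma_i)\le m$ whose associated shortcut vertices form an $\varepsilon$-dense subset of $(\gamma,d_\gamma)$. *)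

theory Defs
  imports Main "HOL.Real"
begin

text \<open>Length metric on a cycle of n unit-length edges, realised as the circle
  [0,n) with vertex number i sitting at parameter i.\<close>
definition cyc_dist :: "nat \<Rightarrow> real \<Rightarrow> real \<Rightarrow> real" where
  "cyc_dist n x y = min \<bar>x - y\<bar> (real n - \<bar>x - y\<bar>)"

definition is_cycle :: "'v set \<Rightarrow> ('v \<Rightarrow> 'v \<Rightarrow> bool) \<Rightarrow> 'v list \<Rightarrow> bool" where
  "is_cycle V E cs \<longleftrightarrow> length cs \<ge> 3 \<and> distinct cs \<and> set cs \<subseteq> V \<and>
     (\<forall>i < length cs. E (cs ! i) (cs ! ((i + 1) mod length cs)))"

text \<open>A path: nonempty vertex list, consecutive vertices adjacent; its length is length - 1.\<close>
definition is_path :: "'v set \<Rightarrow> ('v \<Rightarrow> 'v \<Rightarrow> bool) \<Rightarrow> 'v list \<Rightarrow> bool" where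
  "is_path V E ps \<longleftrightarrow> ps \<noteq> [] \<and> set ps \<subseteq> V \<and>
     (\<forall>i. Suc i < length ps \<longrightarrow> E (ps ! i) (ps ! Suc i))"

text \<open>Strictness (the path meets the cycle only in its endpoints): interior vertices
  avoid the cycle; no edge of ps can be an edge of the cycle because the length
  condition forces cs!i, cs!j to be non-consecutive on the cycle.\<close>
definition strict_shortcut ::
  "'v set \<Rightarrow> ('v \<Rightarrow> 'v \<Rightarrow> bool) \<Rightarrow> 'v list \<Rightarrow> nat \<Rightarrow> nat \<Rightarrow> 'v list \<Rightarrow> bool" where
  "strict_shortcut V E cs i j ps \<longleftrightarrow>
     is_path V E ps \<and> i < length cs \<and> j < length cs \<and>
     hd ps = cs ! i \<and> last ps = cs ! j \<and>
     real (length ps - 1) < cyc_dist (length cs) (real i) (real j) \<and>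
     (\<forall>l. 0 < l \<and> l < length ps - 1 \<longrightarrow> ps ! l \<notin> set cs)"

definition densely_chordal ::
  "'v set \<Rightarrow> ('v \<Rightarrow> 'v \<Rightarrow> bool) \<Rightarrow> real \<Rightarrow> real \<Rightarrow> real \<Rightarrow> bool" where
  "densely_chordal V E \<epsilon> k m \<longleftrightarrow>
     (\<forall>cs. is_cycle V E cs \<and> real (length cs) \<ge> k \<longrightarrow>
        (\<exists>S. finite S \<and>
           (\<forall>(i, j) \<in> S. \<exists>ps. strict_shortcut V E cs i j ps \<and> real (length ps - 1) \<le> m) \<and>
           (\<forall>x. 0 \<le> x \<and> x < real (length cs) \<longrightarrow>
              (\<exists>(i, j) \<in> S. cyc_dist (length cs) x (real i) \<le> \<epsilon> \<or>
                             cyc_dist (length cs) x (real j) \<le> \<epsilon>))))"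

datatype gen = GA | GB

text \<open>Letters: (generator, True) = generator, (generator, False) = its inverse.\<close>
type_synonym letter = "gen \<times> bool"

definition apow :: "int \<Rightarrow> letter list" where
  "apow n = (if n \<ge> 0 then replicate (nat n) (GA, True) else replicate (nat (- n)) (GA, False))"

text \<open>Word equality in BS(p,q) = < a, b | b a^p b^-1 = a^q >: the congruence on words
  generated by free cancellation and the defining relation.\<close>
inductive bs_eq :: "int \<Rightarrow> int \<Rightarrow> letter list \<Rightarrow> letter list \<Rightarrow> bool" for p q where
  refl: "bs_eq p q w w"
| sym: "bs_eq p q u v \<Longrightarrow> bs_eq p q v u"
| trans: "bs_eq p q u v \<Longrightarrow> bs_eq p q v w \<Longrightarrow> bs_eq p q u w"
| cancel: "bs_eq p q [(x, e), (x, \<not> e)] []"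
| rel: "bs_eq p q ([(GB, True)] @ apow p @ [(GB, False)]) (apow q)"
| cong: "bs_eq p q u v \<Longrightarrow> bs_eq p q u' v' \<Longrightarrow> bs_eq p q (u @ u') (v @ v')"

definition bs_elt :: "int \<Rightarrow> int \<Rightarrow> letter list \<Rightarrow> letter list set" where
  "bs_elt p q w = {v. bs_eq p q w v}"

definition bs_vertices :: "int \<Rightarrow> int \<Rightarrow> letter list set set" where
  "bs_vertices p q = range (bs_elt p q)"

definition bs_adj :: "int \<Rightarrow> int \<Rightarrow> letter list set \<Rightarrow> letter list set \<Rightarrow> bool" where
  "bs_adj p q g h \<longleftrightarrow> (\<exists>w l. g = bs_elt p q w \<and> h = bs_elt p q (w @ [l]))"

definition BS_densely_chordal :: "int \<Rightarrow> int \<Rightarrow> real \<Rightarrow> real \<Rightarrow> real \<Rightarrow> bool" where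
  "BS_densely_chordal p q \<epsilon> k m = densely_chordal (bs_vertices p q) (bs_adj p q) \<epsilon> k m"

end

theory Submission
  imports Defs
begin

lemma dc_transfer:
  assumes fV: "\<forall>x\<in>V. f x \<in> V'" and gV: "\<forall>y\<in>V'. g y \<in> V"
    and gf: "\<forall>x\<in>V. g (f x) = x" and fg: "\<forall>y\<in>V'. f (g y) = y"
    and fE: "\<forall>x\<in>V. \<forall>y\<in>V. E x y \<longrightarrow> E' (f x) (f y)"
    and gE: "\<forall>x\<in>V'. \<forall>y\<in>V'. E' x y \<longrightarrow> E (g x) (g y)"
    and dc: "densely_chordal V E \<epsilon> k m"
  shows "densely_chordal V' E' \<epsilon> k m"
  unfolding densely_chordal_def
proof (intro allI impI)
  fix cs' assume A: "is_cycle V' E' cs' \<and> k \<le> real (length cs')"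
  have A1: "set cs' \<subseteq> V'" and A2: "\<forall>i < length cs'. E' (cs' ! i) (cs' ! ((i + 1) mod length cs'))"
    and A3: "distinct cs'" and A4: "length cs' \<ge> 3" and A5: "k \<le> real (length cs')"
    using A unfolding is_cycle_def by blast+
  define cs where "cs = map g cs'"
  have len: "length cs = length cs'" by (simp add: cs_def)
  have inj: "inj_on g V'" by (metis fg inj_onI)
  have cyc: "is_cycle V E cs"
    unfolding is_cycle_def
  proof (intro conjI)
    show "3 \<le> length cs" using A4 len by simp
    show "distinct cs" using A3 A1 inj unfolding cs_def
      by (simp add: distinct_map inj_on_subset)
    show "set cs \<subseteq> V" using A1 gV unfolding cs_def by auto
    show "\<forall>i<length cs. E (cs ! i) (cs ! ((i + 1) mod length cs))"
    proof (intro allI impI)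
      fix i assume i: "i < length cs"
      have m: "(i + 1) mod length cs < length cs" using i by (metis mod_less_divisor gr_implies_not0 neq0_conv)
      have "E' (cs' ! i) (cs' ! ((i + 1) mod length cs'))" using A2 i len by simp
      moreover have "cs' ! i \<in> V'" "cs' ! ((i + 1) mod length cs') \<in> V'"
        using A1 i m len nth_mem by (metis subsetD)+
      ultimately show "E (cs ! i) (cs ! ((i + 1) mod length cs))"
        using gE i m len unfolding cs_def by auto
    qed
  qed
  then obtain S where S: "finite S"
    "\<forall>(i, j) \<in> S. \<exists>ps. strict_shortcut V E cs i j ps \<and> real (length ps - 1) \<le> m"
    "\<forall>x. 0 \<le> x \<and> x < real (length cs) \<longrightarrow>
              (\<exists>(i, j) \<in> S. cyc_dist (length cs) x (real i) \<le> \<epsilon> \<or>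
                             cyc_dist (length cs) x (real j) \<le> \<epsilon>)"
    using dc[unfolded densely_chordal_def, rule_format, of cs] cyc A5 len by auto
  show "\<exists>S. finite S \<and>
           (\<forall>(i, j) \<in> S. \<exists>ps. strict_shortcut V' E' cs' i j ps \<and> real (length ps - 1) \<le> m) \<and>
           (\<forall>x. 0 \<le> x \<and> x < real (length cs') \<longrightarrow>
              (\<exists>(i, j) \<in> S. cyc_dist (length cs') x (real i) \<le> \<epsilon> \<or>
                             cyc_dist (length cs') x (real j) \<le> \<epsilon>))"
  proof (intro exI conjI)
    show "finite S" by fact
    show "\<forall>x. 0 \<le> x \<and> x < real (length cs') \<longrightarrow>
              (\<exists>(i, j) \<in> S. cyc_dist (length cs') x (real i) \<le> \<epsilon> \<or>
                             cyc_dist (length cs') x (real j) \<le> \<epsilon>)" using S(3) len by simp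
    show "\<forall>(i, j) \<in> S. \<exists>ps. strict_shortcut V' E' cs' i j ps \<and> real (length ps - 1) \<le> m"
    proof (clarify)
      fix i j assume ij: "(i, j) \<in> S"
      then obtain ps where ps: "strict_shortcut V E cs i j ps" "real (length ps - 1) \<le> m"
        using S(2) by blast
      have P: "is_path V E ps" and ii: "i < length cs" and jj: "j < length cs"
        and h: "hd ps = cs ! i" and l: "last ps = cs ! j"
        and lt: "real (length ps - 1) < cyc_dist (length cs) (real i) (real j)"
        and int: "\<forall>l. 0 < l \<and> l < length ps - 1 \<longrightarrow> ps ! l \<notin> set cs"
        using ps(1) unfolding strict_shortcut_def by auto
      have ne: "ps \<noteq> []" and sV: "set ps \<subseteq> V" using P by (auto simp: is_path_def)
      have ci: "cs' ! i \<in> V'" "cs' ! j \<in> V'" using A1 ii jj len nth_mem by (metis subsetD)+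
      have "strict_shortcut V' E' cs' i j (map f ps)"
        unfolding strict_shortcut_def
      proof (intro conjI)
        show "is_path V' E' (map f ps)" unfolding is_path_def
        proof (intro conjI allI impI)
          show "map f ps \<noteq> []" using ne by simp
          show "set (map f ps) \<subseteq> V'" using sV fV by auto
          fix r assume "Suc r < length (map f ps)"
          then show "E' (map f ps ! r) (map f ps ! Suc r)"
            using P fE sV unfolding is_path_def by (auto simp: subset_iff)
        qed
        show "i < length cs'" "j < length cs'" using ii jj len by auto
        show "hd (map f ps) = cs' ! i" using h ne fg ci ii unfolding cs_def by (simp add: hd_map)
        show "last (map f ps) = cs' ! j" using l ne fg ci jj unfolding cs_def by (simp add: last_map)
        show "real (length (map f ps) - 1) < cyc_dist (length cs') (real i) (real j)"
          using lt len by simp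
        show "\<forall>l. 0 < l \<and> l < length (map f ps) - 1 \<longrightarrow> map f ps ! l \<notin> set cs'"
        proof (intro allI impI notI)
          fix r assume r: "0 < r \<and> r < length (map f ps) - 1" and mem: "map f ps ! r \<in> set cs'"
          have rin: "ps ! r \<in> V" using r sV by (auto simp: subset_iff)
          have "g (f (ps ! r)) \<in> set cs" using mem r unfolding cs_def by auto
          then have "ps ! r \<in> set cs" using gf rin by simp
          then show False using int r by simp
        qed
      qed
      then show "\<exists>ps. strict_shortcut V' E' cs' i j ps \<and> real (length ps - 1) \<le> m"
        using ps(2) by (intro exI[of _ "map f ps"]) simp
    qed
  qed
qed


fun mapw :: "bool \<Rightarrow> bool \<Rightarrow> bool \<Rightarrow> letter list \<Rightarrow> letter list" where
  "mapw P c d [] = []"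
| "mapw P c d ((GA, e) # w) = (GA, e \<noteq> c) # mapw P c d w"
| "mapw P c d ((GB, e) # w) = (GB, e \<noteq> d) # mapw P (if P then \<not> c else c) d w"

definition nb :: "letter list \<Rightarrow> nat" where
  "nb u = length (filter (\<lambda>l. fst l = GB) u)"

lemma nb_simps[simp]: "nb [] = 0" "nb ((GA, e) # w) = nb w" "nb ((GB, e) # w) = Suc (nb w)"
  "nb (u @ v) = nb u + nb v"
  by (auto simp: nb_def)

lemma mapw_append: "mapw P c d (u @ v) = mapw P c d u @ mapw P (c \<noteq> (P \<and> odd (nb u))) d v"
proof (induction u arbitrary: c)
  case Nil then show ?case by simp
next
  case (Cons l u)
  obtain x e where l: "l = (x, e)" by force
  show ?case using Cons by (cases x; cases c) (auto simp: l)
qed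

lemma mapw_invol: "mapw P c d (mapw P c d w) = w"
proof (induction w arbitrary: c)
  case Nil then show ?case by simp
next
  case (Cons l u)
  obtain x e where l: "l = (x, e)" by force
  show ?case using Cons by (cases x) (auto simp: l)
qed

lemma mapw_single: "\<exists>l'. mapw P c d [l] = [l']"
proof -
  obtain x e where l: "l = (x, e)" by force
  show ?thesis by (cases x) (auto simp: l)
qed

lemma mapw_rep: "mapw P c d (replicate n (GA, e)) = replicate n (GA, e \<noteq> c)"
  by (induction n) auto

lemma nb_rep: "nb (replicate n (GA, e)) = 0"
  by (induction n) auto

lemma mapw_apow: "mapw P c d (apow n) = apow (if c then - n else n)"
  by (auto simp: apow_def mapw_rep)

lemma nb_apow: "nb (apow n) = 0"
  by (simp add: apow_def nb_rep)

definition winv :: "letter list \<Rightarrow> letter list" where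
  "winv w = rev (map (\<lambda>(x, e). (x, \<not> e)) w)"

lemma winv_apow: "winv (apow n) = apow (- n)"
  by (auto simp: apow_def winv_def)

lemma winv_winv: "winv (winv w) = w"
  by (induction w) (auto simp: winv_def)

lemma bs_ctx: "bs_eq p q u v \<Longrightarrow> bs_eq p q (x @ u @ y) (x @ v @ y)"
  by (intro bs_eq.cong bs_eq.refl)

lemma bs_cancel_inv: "bs_eq p q (w @ winv w) []"
proof (induction w)
  case Nil then show ?case by (simp add: winv_def bs_eq.refl)
next
  case (Cons l w)
  obtain x e where l: "l = (x, e)" by force
  have eq: "(l # w) @ winv (l # w) = [l] @ (w @ winv w) @ [(x, \<not> e)]"
    by (simp add: winv_def l)
  have "bs_eq p q ([l] @ (w @ winv w) @ [(x, \<not> e)]) ([l] @ [] @ [(x, \<not> e)])"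
    using bs_ctx[OF Cons] .
  moreover have "bs_eq p q ([l] @ [] @ [(x, \<not> e)]) []" using bs_eq.cancel[of p q x e] by (simp add: l)
  ultimately show ?case unfolding eq by (rule bs_eq.trans)
qed

lemma bs_cancel_inv2: "bs_eq p q (winv w @ w) []"
  using bs_cancel_inv[of p q "winv w"] by (simp add: winv_winv)

lemma bs_inv: assumes "bs_eq p q u v" shows "bs_eq p q (winv u) (winv v)"
proof -
  have "bs_eq p q (winv u @ [] @ []) (winv u @ (v @ winv v) @ [])"
    by (rule bs_ctx, rule bs_eq.sym, rule bs_cancel_inv)
  moreover have "bs_eq p q (winv u @ (v @ winv v) @ []) (winv u @ (u @ winv v) @ [])"
    by (rule bs_ctx, rule bs_ctx[of _ _ _ _ "[]", simplified], rule bs_eq.sym, rule assms)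
  moreover have "bs_eq p q ([] @ (winv u @ u) @ winv v) ([] @ [] @ winv v)"
    by (rule bs_ctx, rule bs_cancel_inv2)
  ultimately show ?thesis by (auto intro: bs_eq.trans)
qed

lemma mapw_resp:
  assumes key: "\<And>c. bs_eq p' q' ([(GB, \<not> d)] @ apow (if c \<noteq> P then - p else p) @ [(GB, d)])
                     (apow (if c then - q else q))"
  shows "bs_eq p q u v \<Longrightarrow> even (nb u + nb v) \<and> (\<forall>c. bs_eq p' q' (mapw P c d u) (mapw P c d v))"
proof (induction rule: bs_eq.induct)
  case (refl w) then show ?case by (auto intro: bs_eq.refl)
next
  case (sym u v) then show ?case by (auto intro: bs_eq.sym)
next
  case (trans u v w) then show ?case by (auto intro: bs_eq.trans)
next
  case (cancel x e)
  have "bs_eq p' q' (mapw P c d [(x, e), (x, \<not> e)]) (mapw P c d [])" for c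
  proof (cases x)
    case GA
    then show ?thesis using bs_eq.cancel[of p' q' GA "e \<noteq> c"] by simp
  next
    case GB
    then show ?thesis using bs_eq.cancel[of p' q' GB "e \<noteq> d"] by simp
  qed
  then show ?case by (cases x) auto
next
  case rel
  show ?case
  proof
    show "even (nb ([(GB, True)] @ apow p @ [(GB, False)]) + nb (apow q))" by (simp add: nb_apow)
    show "\<forall>c. bs_eq p' q' (mapw P c d ([(GB, True)] @ apow p @ [(GB, False)])) (mapw P c d (apow q))"
    proof
      fix c
      have "mapw P c d ([(GB, True)] @ apow p @ [(GB, False)])
         = [(GB, \<not> d)] @ apow (if c \<noteq> P then - p else p) @ [(GB, d)]"
        by (simp add: mapw_append mapw_apow nb_apow)
      then show "bs_eq p' q' (mapw P c d ([(GB, True)] @ apow p @ [(GB, False)])) (mapw P c d (apow q))"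
        using key[of c] by (simp add: mapw_apow)
    qed
  qed
next
  case (cong u v u' v')
  then show ?case by (auto simp: mapw_append intro!: bs_eq.cong)
qed


lemma winv_append: "winv (u @ v) = winv v @ winv u"
  by (simp add: winv_def)

lemma winv_single: "winv [(x, e)] = [(x, \<not> e)]"
  by (simp add: winv_def)

lemma relinv: "bs_eq p q ([(GB, True)] @ apow (- p) @ [(GB, False)]) (apow (- q))"
  using bs_inv[OF bs_eq.rel[of p q]] unfolding winv_append winv_single winv_apow by simp

lemma conj_rel: "bs_eq q p ([(GB, False)] @ apow p @ [(GB, True)]) (apow q)"
proof -
  have "bs_eq q p ([(GB, False)] @ apow p @ [(GB, True)])
          ([(GB, False)] @ ([(GB, True)] @ apow q @ [(GB, False)]) @ [(GB, True)])"
    by (rule bs_ctx, rule bs_eq.sym, rule bs_eq.rel)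
  moreover have "bs_eq q p ([(GB, False), (GB, True)] @ apow q @ [(GB, False), (GB, True)])
     ([] @ apow q @ [])"
    using bs_eq.cancel[of q p GB False] by (intro bs_eq.cong bs_eq.refl) simp_all
  ultimately show ?thesis by (auto intro: bs_eq.trans)
qed

lemma bs_elt_eq: "bs_elt p q u = bs_elt p q v \<longleftrightarrow> bs_eq p q u v"
proof
  assume "bs_elt p q u = bs_elt p q v"
  then show "bs_eq p q u v" using bs_eq.refl[of p q v] by (auto simp: bs_elt_def)
next
  assume "bs_eq p q u v"
  then show "bs_elt p q u = bs_elt p q v"
    by (auto simp: bs_elt_def intro: bs_eq.trans bs_eq.sym)
qed

definition transf :: "int \<Rightarrow> int \<Rightarrow> int \<Rightarrow> int \<Rightarrow> (letter list \<Rightarrow> letter list)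
   \<Rightarrow> letter list set \<Rightarrow> letter list set" where
  "transf p q p' q' F X = bs_elt p' q' (F (SOME w. X = bs_elt p q w))"

lemma transf_elt:
  assumes r: "\<forall>u v. bs_eq p q u v \<longrightarrow> bs_eq p' q' (F u) (F v)"
  shows "transf p q p' q' F (bs_elt p q w) = bs_elt p' q' (F w)"
proof -
  have "bs_elt p q w = bs_elt p q (SOME w'. bs_elt p q w = bs_elt p q w')"
    by (rule someI[of _ w]) simp
  then have "bs_eq p q (SOME w'. bs_elt p q w = bs_elt p q w') w"
    by (metis bs_elt_eq)
  then show ?thesis using r unfolding transf_def by (simp add: bs_elt_eq)
qed

lemma bs_transfer:
  assumes r1: "\<forall>u v. bs_eq p q u v \<longrightarrow> bs_eq p' q' (F u) (F v)"
    and r2: "\<forall>u v. bs_eq p' q' u v \<longrightarrow> bs_eq p q (F u) (F v)"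
    and iv: "\<forall>w. F (F w) = w"
    and sn: "\<forall>w l. \<exists>l'. F (w @ [l]) = F w @ [l']"
    and dc: "BS_densely_chordal p q \<epsilon> k m"
  shows "BS_densely_chordal p' q' \<epsilon> k m"
  unfolding BS_densely_chordal_def
proof (rule dc_transfer[where f = "transf p q p' q' F" and g = "transf p' q' p q F"])
  note t1 = transf_elt[OF r1] and t2 = transf_elt[OF r2]
  show "\<forall>x\<in>bs_vertices p q. transf p q p' q' F x \<in> bs_vertices p' q'"
    by (auto simp: bs_vertices_def t1)
  show "\<forall>x\<in>bs_vertices p' q'. transf p' q' p q F x \<in> bs_vertices p q"
    by (auto simp: bs_vertices_def t2)
  show "\<forall>x\<in>bs_vertices p q. transf p' q' p q F (transf p q p' q' F x) = x"
    by (auto simp: bs_vertices_def t1 t2 iv)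
  show "\<forall>x\<in>bs_vertices p' q'. transf p q p' q' F (transf p' q' p q F x) = x"
    by (auto simp: bs_vertices_def t1 t2 iv)
  show "\<forall>x\<in>bs_vertices p q. \<forall>y\<in>bs_vertices p q.
     bs_adj p q x y \<longrightarrow> bs_adj p' q' (transf p q p' q' F x) (transf p q p' q' F y)"
  proof (intro ballI impI)
    fix x y assume "bs_adj p q x y"
    then obtain w l where xy: "x = bs_elt p q w" "y = bs_elt p q (w @ [l])" unfolding bs_adj_def by blast
    obtain l' where Fl: "F (w @ [l]) = F w @ [l']" using sn by blast
    show "bs_adj p' q' (transf p q p' q' F x) (transf p q p' q' F y)"
      unfolding bs_adj_def xy t1 by (intro exI[of _ "F w"] exI[of _ l']) (simp add: Fl)
  qed
  show "\<forall>x\<in>bs_vertices p' q'. \<forall>y\<in>bs_vertices p' q'.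
     bs_adj p' q' x y \<longrightarrow> bs_adj p q (transf p' q' p q F x) (transf p' q' p q F y)"
  proof (intro ballI impI)
    fix x y assume "bs_adj p' q' x y"
    then obtain w l where xy: "x = bs_elt p' q' w" "y = bs_elt p' q' (w @ [l])" unfolding bs_adj_def by blast
    obtain l' where Fl: "F (w @ [l]) = F w @ [l']" using sn by blast
    show "bs_adj p q (transf p' q' p q F x) (transf p' q' p q F y)"
      unfolding bs_adj_def xy t2 by (intro exI[of _ "F w"] exI[of _ l']) (simp add: Fl)
  qed
  show "densely_chordal (bs_vertices p q) (bs_adj p q) \<epsilon> k m" using dc by (simp add: BS_densely_chordal_def)
qed

lemma mapw_transfer:
  assumes key: "\<And>c. bs_eq p' q' ([(GB, \<not> d)] @ apow (if c \<noteq> P then - p else p) @ [(GB, d)])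
                     (apow (if c then - q else q))"
    and key': "\<And>c. bs_eq p q ([(GB, \<not> d)] @ apow (if c \<noteq> P then - p' else p') @ [(GB, d)])
                     (apow (if c then - q' else q'))"
    and dc: "BS_densely_chordal p q \<epsilon> k m"
  shows "BS_densely_chordal p' q' \<epsilon> k m"
proof (rule bs_transfer[where F = "mapw P c0 d"])
  show "\<forall>u v. bs_eq p q u v \<longrightarrow> bs_eq p' q' (mapw P c0 d u) (mapw P c0 d v)"
    using mapw_resp[OF key] by blast
  show "\<forall>u v. bs_eq p' q' u v \<longrightarrow> bs_eq p q (mapw P c0 d u) (mapw P c0 d v)"
    using mapw_resp[OF key'] by blast
  show "\<forall>w. mapw P c0 d (mapw P c0 d w) = w" by (simp add: mapw_invol)
  show "\<forall>w l. \<exists>l'. mapw P c0 d (w @ [l]) = mapw P c0 d w @ [l']"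
    using mapw_single by (simp add: mapw_append)
qed (fact dc)

lemma key1: "bs_eq (- p) q ([(GB, \<not> False)] @ apow (if c \<noteq> True then - p else p) @ [(GB, False)])
                     (apow (if c then - q else q))"
  using bs_eq.rel[of "- p" q] relinv[of "- p" q] by (cases c) auto

lemma key2: "bs_eq (- p) (- q) ([(GB, \<not> False)] @ apow (if c \<noteq> False then - p else p) @ [(GB, False)])
                     (apow (if c then - q else q))"
  using bs_eq.rel[of "- p" "- q"] relinv[of "- p" "- q"] by (cases c) auto

lemma key1': "bs_eq p q ([(GB, \<not> False)] @ apow (if c \<noteq> True then - (- p) else - p) @ [(GB, False)])
                     (apow (if c then - q else q))"
  using key1[of p q c] key1[of "- p" q c] by simp

lemma key2': "bs_eq p q ([(GB, \<not> False)] @ apow (if c \<noteq> False then - (- p) else - p) @ [(GB, False)])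
                     (apow (if c then - (- q) else - q))"
  using key2[of "- p" "- q" c] by simp

lemma key3: "bs_eq q p ([(GB, \<not> True)] @ apow (if c \<noteq> False then - p else p) @ [(GB, True)])
                     (apow (if c then - q else q))"
proof (cases c)
  case False then show ?thesis using conj_rel[of q p] by simp
next
  case True then show ?thesis using bs_inv[OF conj_rel[of q p]]
    unfolding winv_append winv_single winv_apow by simp
qed

lemma T1: "BS_densely_chordal p q \<epsilon> k m \<longleftrightarrow> BS_densely_chordal (- p) q \<epsilon> k m"
  using mapw_transfer[OF key1 key1']
        mapw_transfer[OF key1[where p="- p"] key1'[where p="- p"]] by (metis minus_minus)

lemma T2: "BS_densely_chordal p q \<epsilon> k m \<longleftrightarrow> BS_densely_chordal (- p) (- q) \<epsilon> k m"
  using mapw_transfer[OF key2 key2']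
        mapw_transfer[OF key2[where p="- p" and q="- q"] key2'[where p="- p" and q="- q"]] by (metis minus_minus)

lemma T3: "BS_densely_chordal p q \<epsilon> k m \<longleftrightarrow> BS_densely_chordal q p \<epsilon> k m"
  using mapw_transfer[OF key3 key3[where p=q and q=p]] mapw_transfer[OF key3[where p=q and q=p] key3] by blast

theorem proposition2:
  fixes s t :: nat and \<epsilon> k m :: real
  assumes "\<epsilon> > 0" and "k > 0" and "m > 0"
  shows "(BS_densely_chordal (int s) (int t) \<epsilon> k m \<longleftrightarrow> BS_densely_chordal (- int s) (int t) \<epsilon> k m) \<and>
         (BS_densely_chordal (int s) (int t) \<epsilon> k m \<longleftrightarrow> BS_densely_chordal (int s) (- int t) \<epsilon> k m) \<and>
         (BS_densely_chordal (int s) (int t) \<epsilon> k m \<longleftrightarrow> BS_densely_chordal (- int s) (- int t) \<epsilon> k m) \<and>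
         (BS_densely_chordal (int s) (int t) \<epsilon> k m \<longleftrightarrow> BS_densely_chordal (int t) (int s) \<epsilon> k m) \<and>
         (BS_densely_chordal (int s) (int t) \<epsilon> k m \<longleftrightarrow> BS_densely_chordal (- int t) (int s) \<epsilon> k m) \<and>
         (BS_densely_chordal (int s) (int t) \<epsilon> k m \<longleftrightarrow> BS_densely_chordal (int t) (- int s) \<epsilon> k m) \<and>
         (BS_densely_chordal (int s) (int t) \<epsilon> k m \<longleftrightarrow> BS_densely_chordal (- int t) (- int s) \<epsilon> k m)"
  using T1[of "int s" "int t" \<epsilon> k m] T2[of "int s" "int t" \<epsilon> k m] T3[of "int s" "int t" \<epsilon> k m]
    T1[of "int t" "int s" \<epsilon> k m] T2[of "- int s" "int t" \<epsilon> k m] T2[of "- int t" "int s" \<epsilon> k m]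
    T2[of "int t" "int s" \<epsilon> k m]
  by simp

end
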